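(* For every integer $n\ge 2$ there exists a weighted undirected graph $G$ on $n$ vertices with $\mathrm{cdim}(G)=2n-3$.
   Context: A weighted undirected graph $G=(V,w)$ consists of a finite vertex set $V$ and a weight function $w$ assigning a nonnegative real number to each unordered pair of distinct vertices. The edge set is $E=\{e : w(e)>0\}$, $m=|E|$. For $\emptyset \ne X \subsetneq V$, $\Delta(X)$ denotes the set of edges of $E$ with exactly one endpoint in $X$ (a cut), with weight $w(\Delta(X))=\sum_{e\in\Delta(X)}w(e)$. $\mathcal{M}(G)$ is the set of cuts of minimum weight. For $S\subseteq E$, $\chi(S)\in\{0,1\}^m$ is its characteristic vector indexed by $E$. The cut dimension is $\mathrm{cdim}(G)=\dim\,\mathrm{span}\{\chi(S): S\in\mathcal{M}(G)\}$. *)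

theory Defs
  imports "HOL-Analysis.Analysis" "HOL-Library.Function_Algebras"
begin

text \<open>A weighted undirected graph on vertex set V: the weight function w assigns a real
  number to each unordered pair of distinct vertices, represented as the two-element set.\<close>

definition edges :: "'a set \<Rightarrow> ('a set \<Rightarrow> real) \<Rightarrow> 'a set set" where
  "edges V w = {e. \<exists>u v. u \<in> V \<and> v \<in> V \<and> u \<noteq> v \<and> e = {u, v} \<and> w e > 0}"

definition cut :: "'a set \<Rightarrow> ('a set \<Rightarrow> real) \<Rightarrow> 'a set \<Rightarrow> 'a set set" where
  "cut V w X = {e \<in> edges V w. card (e \<inter> X) = 1}"

definition cut_weight :: "'a set \<Rightarrow> ('a set \<Rightarrow> real) \<Rightarrow> 'a set \<Rightarrow> real" where
  "cut_weight V w X = (\<Sum>e\<in>cut V w X. w e)"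

definition proper_cut_side :: "'a set \<Rightarrow> 'a set \<Rightarrow> bool" where
  "proper_cut_side V X \<longleftrightarrow> X \<noteq> {} \<and> X \<subset> V"

definition min_cuts :: "'a set \<Rightarrow> ('a set \<Rightarrow> real) \<Rightarrow> 'a set set set" where
  "min_cuts V w = {cut V w X | X. proper_cut_side V X \<and>
      (\<forall>Y. proper_cut_side V Y \<longrightarrow> cut_weight V w X \<le> cut_weight V w Y)}"

text \<open>Characteristic vector of an edge set S, as a real-valued function on edges
  (vectors indexed by E; S is always a subset of E, so it vanishes outside E).\<close>
definition charvec :: "'a set set \<Rightarrow> ('a set \<Rightarrow> real)" where
  "charvec S = (\<lambda>e. if e \<in> S then 1 else 0)"

definition fun_dim :: "('b \<Rightarrow> real) set \<Rightarrow> nat" where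
  "fun_dim B = vector_space.dim (\<lambda>c f x. c * f x) B"

definition cdim :: "'a set \<Rightarrow> ('a set \<Rightarrow> real) \<Rightarrow> nat" where
  "cdim V w = fun_dim (charvec ` min_cuts V w)"

definition weight_fun :: "'a set \<Rightarrow> ('a set \<Rightarrow> real) \<Rightarrow> bool" where
  "weight_fun V w \<longleftrightarrow> (\<forall>u\<in>V. \<forall>v\<in>V. u \<noteq> v \<longrightarrow> w {u, v} \<ge> 0)"

end

theory Submission
  imports Defs
begin


interpretation FV: vector_space "(\<lambda>c f x. c * f x) :: real \<Rightarrow> ('a \<Rightarrow> real) \<Rightarrow> ('a \<Rightarrow> real)"
  by unfold_locales (auto simp: fun_eq_iff algebra_simps)

lemma sum_fun_apply: "finite A \<Longrightarrow> (\<Sum>x\<in>A. f x) y = (\<Sum>x\<in>A. f x y)"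
  by (induction A rule: finite_induct) auto

lemma diag_indep:
  fixes g :: "'i \<Rightarrow> 'a \<Rightarrow> real"
  assumes fin: "finite I" and nz: "\<And>i. i \<in> I \<Longrightarrow> g i (p i) \<noteq> 0"
    and z: "\<And>i j. i \<in> I \<Longrightarrow> j \<in> I \<Longrightarrow> j \<noteq> i \<Longrightarrow> g j (p i) = 0"
  shows "inj_on g I" "FV.independent (g ` I)"
proof -
  show inj: "inj_on g I"
  proof (rule inj_onI)
    fix i j assume "i \<in> I" "j \<in> I" "g i = g j"
    then show "i = j" using nz z by (metis)
  qed
  show "FV.independent (g ` I)"
  proof (rule FV.independent_if_scalars_zero)
    show "finite (g ` I)" using fin by simp
    fix f :: "('a \<Rightarrow> real) \<Rightarrow> real" and x
    assume s: "(\<Sum>x\<in>g ` I. (\<lambda>c f x. c * f x) (f x) x) = 0" and x: "x \<in> g ` I"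
    then obtain i where i: "i \<in> I" "x = g i" by auto
    have "0 = (\<Sum>y\<in>g ` I. (\<lambda>c f x. c * f x) (f y) y) (p i)" using s by simp
    also have "\<dots> = (\<Sum>y\<in>g ` I. f y * y (p i))"
      using fin by (simp add: sum_fun_apply)
    also have "\<dots> = f (g i) * g i (p i) + (\<Sum>y\<in>g ` I - {g i}. f y * y (p i))"
      using fin i by (simp add: sum.remove[of "g ` I" "g i"])
    also have "(\<Sum>y\<in>g ` I - {g i}. f y * y (p i)) = 0"
      by (rule sum.neutral) (use z i in auto)
    finally show "f x = 0" using nz[OF i(1)] i by simp
  qed
qed

lemma cdim_from:
  assumes "finite F" "min_cuts V w \<subseteq> F" "card F \<le> k"
    "Bs \<subseteq> FV.span (charvec ` min_cuts V w)" "FV.independent Bs" "card Bs = k"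
  shows "cdim V w = k"
proof -
  have fin: "finite (charvec ` min_cuts V w)" using assms(1,2) finite_subset by blast
  have "FV.dim (charvec ` min_cuts V w) \<le> card (charvec ` min_cuts V w)"
    by (rule FV.dim_le_card[OF FV.span_superset fin])
  also have "\<dots> \<le> card (min_cuts V w)" by (rule card_image_le) (use assms(1,2) finite_subset in blast)
  also have "\<dots> \<le> card F" by (rule card_mono) (use assms in auto)
  finally have le: "FV.dim (charvec ` min_cuts V w) \<le> k" using assms(3) by simp
  obtain A where A: "A \<subseteq> charvec ` min_cuts V w" "FV.independent A"
      "charvec ` min_cuts V w \<subseteq> FV.span A" "card A = FV.dim (charvec ` min_cuts V w)"
    by (rule FV.basis_exists)
  have "FV.span (charvec ` min_cuts V w) \<subseteq> FV.span A"
    using A(3) by (metis FV.span_mono FV.span_span)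
  then have "card Bs \<le> card A"
    using FV.independent_span_bound[of A Bs] A(1) fin assms(4,5) finite_subset by blast
  then have "k \<le> FV.dim (charvec ` min_cuts V w)" using assms(6) A(4) by simp
  with le show ?thesis by (simp add: cdim_def fun_dim_def)
qed



lemma card_pair_inter:
  assumes "a \<noteq> b" shows "card ({a, b} \<inter> X) = 1 \<longleftrightarrow> ((a \<in> X) \<noteq> (b \<in> X))"
proof -
  consider "a \<in> X" "b \<in> X" | "a \<in> X" "b \<notin> X" | "a \<notin> X" "b \<in> X" | "a \<notin> X" "b \<notin> X" by blast
  then show ?thesis
  proof cases
    case 1 then have "{a,b} \<inter> X = {a,b}" by auto
    then show ?thesis using assms 1 by simp
  next
    case 2 then have "{a,b} \<inter> X = {a}" by auto
    then show ?thesis using 2 by simp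
  next
    case 3 then have "{a,b} \<inter> X = {b}" by auto
    then show ?thesis using 3 by simp
  next
    case 4 then have "{a,b} \<inter> X = {}" by auto
    then show ?thesis using 4 by simp
  qed
qed

lemma card_pair_inter':
  assumes "a \<noteq> b" shows "card ({a, b} \<inter> X) = Suc 0 \<longleftrightarrow> ((a \<in> X) \<noteq> (b \<in> X))"
  using card_pair_inter[OF assms] by simp

lemmas cpi = card_pair_inter card_pair_inter'

lemma cut_compl:
  assumes "X \<subseteq> V" shows "cut V w (V - X) = cut V w X"
  unfolding cut_def
proof (intro Collect_cong conj_cong refl)
  fix e assume "e \<in> edges V w"
  then obtain a b where ab: "a \<in> V" "b \<in> V" "a \<noteq> b" "e = {a,b}" unfolding edges_def by auto
  show "card (e \<inter> (V - X)) = 1 \<longleftrightarrow> card (e \<inter> X) = 1"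
    using ab by (auto simp: cpi)
qed

lemma cut_weight_compl:
  assumes "X \<subseteq> V" shows "cut_weight V w (V - X) = cut_weight V w X"
  using cut_compl[OF assms] by (simp add: cut_weight_def)

lemma cut_weight_dsum:
  assumes wf: "weight_fun V w" and X: "X \<subseteq> V" and fin: "finite V"
  shows "cut_weight V w X = (\<Sum>u\<in>X. \<Sum>v\<in>V - X. w {u, v})"
proof -
  let ?P = "X \<times> (V - X)"
  let ?Q = "{p \<in> ?P. w {fst p, snd p} > 0}"
  have finP: "finite ?P" using fin X finite_subset by blast
  have "(\<Sum>u\<in>X. \<Sum>v\<in>V - X. w {u, v}) = (\<Sum>p\<in>?P. w {fst p, snd p})"
    by (simp add: sum.cartesian_product case_prod_beta)
  also have "\<dots> = (\<Sum>p\<in>?Q. w {fst p, snd p})"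
  proof (rule sum.mono_neutral_right[OF finP])
    show "?Q \<subseteq> ?P" by blast
    show "\<forall>p\<in>?P - ?Q. w {fst p, snd p} = 0"
    proof
      fix p assume p: "p \<in> ?P - ?Q"
      then have "fst p \<in> V" "snd p \<in> V" "fst p \<noteq> snd p" using X by auto
      then have "w {fst p, snd p} \<ge> 0" using wf unfolding weight_fun_def by blast
      then show "w {fst p, snd p} = 0" using p by auto
    qed
  qed
  also have "\<dots> = (\<Sum>e\<in>cut V w X. w e)"
  proof (rule sum.reindex_bij_betw)
    show "bij_betw (\<lambda>p. {fst p, snd p}) ?Q (cut V w X)"
    proof (rule bij_betwI')
      fix p q assume "p \<in> ?Q" "q \<in> ?Q"
      then show "({fst p, snd p} = {fst q, snd q}) = (p = q)"
        by (cases p, cases q) (auto simp: doubleton_eq_iff)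
    next
      fix p assume p: "p \<in> ?Q"
      then have "fst p \<noteq> snd p" "fst p \<in> V" "snd p \<in> V" using X by auto
      then show "{fst p, snd p} \<in> cut V w X"
        using p unfolding cut_def edges_def by (auto simp: cpi)
    next
      fix e assume "e \<in> cut V w X"
      then obtain a b where ab: "a \<in> V" "b \<in> V" "a \<noteq> b" "e = {a,b}" "w e > 0"
        and c: "card (e \<inter> X) = 1" unfolding cut_def edges_def by auto
      from c ab have ne: "(a \<in> X) \<noteq> (b \<in> X)" by (simp add: cpi)
      show "\<exists>p\<in>?Q. e = {fst p, snd p}"
      proof (cases "a \<in> X")
        case True with ne have "b \<notin> X" by blast
        with True show ?thesis using ab by (intro bexI[of _ "(a,b)"]) auto
      next
        case False with ne have "b \<in> X" by blast
        with False show ?thesis using ab by (intro bexI[of _ "(b,a)"]) (auto simp: insert_commute)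
      qed
    qed
  qed
  finally show ?thesis by (simp add: cut_weight_def)
qed

definition Ebet :: "'a set \<Rightarrow> ('a set \<Rightarrow> real) \<Rightarrow> 'a \<Rightarrow> 'a set \<Rightarrow> 'a set set" where
  "Ebet V w v X = {e \<in> edges V w. \<exists>x\<in>X. e = {v, x}}"

lemma charvec_step:
  assumes X: "X \<subseteq> V" and v: "v \<in> V" "v \<notin> X"
  shows "charvec (cut V w X) + charvec (cut V w {v}) - charvec (cut V w (insert v X))
       = (\<lambda>c f x. c * f x) 2 (charvec (Ebet V w v X))"
proof
  fix e
  show "(charvec (cut V w X) + charvec (cut V w {v}) - charvec (cut V w (insert v X))) e
       = (\<lambda>c f x. c * f x) 2 (charvec (Ebet V w v X)) e"
  proof (cases "e \<in> edges V w")
    case False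
    then show ?thesis by (simp add: charvec_def cut_def Ebet_def)
  next
    case True
    then obtain a b where ab: "a \<in> V" "b \<in> V" "a \<noteq> b" "e = {a,b}" unfolding edges_def by auto
    have eb: "e \<in> Ebet V w v X \<longleftrightarrow> (a = v \<and> b \<in> X) \<or> (b = v \<and> a \<in> X)"
      using True ab unfolding Ebet_def by (auto simp: doubleton_eq_iff)
    have c1: "e \<in> cut V w X \<longleftrightarrow> (a \<in> X) \<noteq> (b \<in> X)"
      using True ab by (simp add: cut_def cpi)
    have c2: "e \<in> cut V w {v} \<longleftrightarrow> (a = v) \<noteq> (b = v)"
      using True ab by (simp add: cut_def cpi)
    have c3: "e \<in> cut V w (insert v X) \<longleftrightarrow> (a = v \<or> a \<in> X) \<noteq> (b = v \<or> b \<in> X)"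
      using True ab by (simp add: cut_def cpi)
    show ?thesis
      unfolding charvec_def fun_diff_def plus_fun_def c1 c2 c3 eb
      using ab(3) v(2) by (cases "a \<in> X"; cases "b \<in> X"; cases "a = v"; cases "b = v") auto
  qed
qed



locale Gr =
  fixes n :: nat
  assumes n3: "3 \<le> n"
begin

definition d :: real where "d = real (n - 2)"

definition fw :: "nat \<Rightarrow> nat \<Rightarrow> real" where
  "fw i j = (if j = n - 1 then (if i = n - 2 then d else 1)
            else if i = 0 then (if j = 1 then d else 1)
            else if j = Suc i then d - 1 else 0)"

definition wt :: "nat set \<Rightarrow> real" where
  "wt e = (if card e = 2 then fw (Min e) (Max e) else 0)"

abbreviation "VV \<equiv> {0..<n}"

lemma d_ge1: "d \<ge> 1" using n3 by (simp add: d_def)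

lemma wt_pair: "u \<noteq> v \<Longrightarrow> wt {u, v} = fw (min u v) (max u v)"
  by (simp add: wt_def)

lemma wt_lt: "u < v \<Longrightarrow> wt {u, v} = fw u v"
  by (simp add: wt_pair)

lemma wt_gt: "v < u \<Longrightarrow> wt {u, v} = fw v u"
  by (simp add: wt_pair)

lemma fw_nonneg: "fw i j \<ge> 0"
  using d_ge1 by (simp add: fw_def)

lemma weight_fun: "weight_fun VV wt"
  unfolding weight_fun_def using fw_nonneg by (auto simp: wt_pair)

lemma back_mid:
  assumes "1 \<le> u" "u \<le> n - 2"
  shows "(\<Sum>v\<in>{..<u}. fw v u) = d"
proof -
  let ?A = "if u = 1 then d else 1"
  let ?B = "if 2 \<le> u then d - 1 else 0"
  have "(\<Sum>v\<in>{..<u}. fw v u) = (\<Sum>v\<in>{..<u}. (if v = 0 then ?A else 0) + (if v = u - 1 then ?B else 0))"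
  proof (rule sum.cong[OF refl])
    fix v assume "v \<in> {..<u}"
    then show "fw v u = (if v = 0 then ?A else 0) + (if v = u - 1 then ?B else 0)"
      using assms n3 by (auto simp: fw_def)
  qed
  also have "\<dots> = ?A + ?B" using assms by (simp add: sum.distrib)
  also have "\<dots> = d" using assms by auto
  finally show ?thesis .
qed

lemma back_last: "(\<Sum>v\<in>{..<n-1}. fw v (n-1)) = 2 * d"
proof -
  have "(\<Sum>v\<in>{..<n-1}. fw v (n-1)) = (\<Sum>v\<in>{..<n-1}. 1 + (if v = n - 2 then d - 1 else 0))"
    by (rule sum.cong) (auto simp: fw_def)
  also have "\<dots> = real (n - 1) + (d - 1)" using n3 by (simp add: sum.distrib)
  also have "\<dots> = 2 * d" using n3 by (simp add: d_def)
  finally show ?thesis .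
qed

lemma fwd_0: "(\<Sum>v\<in>{0<..<n}. fw 0 v) = 2 * d"
proof -
  have "(\<Sum>v\<in>{0<..<n}. fw 0 v) = (\<Sum>v\<in>{0<..<n}. 1 + (if v = 1 then d - 1 else 0))"
    by (rule sum.cong) (use n3 in \<open>auto simp: fw_def\<close>)
  also have "\<dots> = real (n - 1) + (d - 1)" using n3 by (simp add: sum.distrib)
  also have "\<dots> = 2 * d" using n3 by (simp add: d_def)
  finally show ?thesis .
qed

lemma fwd_mid:
  assumes "1 \<le> u" "u \<le> n - 2"
  shows "(\<Sum>v\<in>{u<..<n}. fw u v) = d"
proof -
  let ?B = "if u \<le> n - 3 then d - 1 else 0"
  let ?A = "if u = n - 2 then d else 1"
  have "(\<Sum>v\<in>{u<..<n}. fw u v) = (\<Sum>v\<in>{u<..<n}. (if v = n - 1 then ?A else 0) + (if v = Suc u then ?B else 0))"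
    by (rule sum.cong) (use assms n3 in \<open>auto simp: fw_def\<close>)
  also have "\<dots> = ?A + ?B" using assms n3 by (simp add: sum.distrib) presburger
  also have "\<dots> = d" using assms n3 by auto
  finally show ?thesis .
qed


lemma deg: assumes "u < n" shows "(\<Sum>v\<in>VV - {u}. wt {u, v}) = 2 * d"
proof -
  have split: "VV - {u} = {..<u} \<union> {u<..<n}" using assms by auto
  have "(\<Sum>v\<in>VV - {u}. wt {u, v}) = (\<Sum>v\<in>{..<u}. wt {u, v}) + (\<Sum>v\<in>{u<..<n}. wt {u, v})"
    unfolding split by (rule sum.union_disjoint) auto
  also have "(\<Sum>v\<in>{..<u}. wt {u, v}) = (\<Sum>v\<in>{..<u}. fw v u)"
    by (rule sum.cong) (auto simp: wt_gt)
  also have "(\<Sum>v\<in>{u<..<n}. wt {u, v}) = (\<Sum>v\<in>{u<..<n}. fw u v)"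
    by (rule sum.cong) (auto simp: wt_lt)
  finally have e: "(\<Sum>v\<in>VV - {u}. wt {u, v}) = (\<Sum>v\<in>{..<u}. fw v u) + (\<Sum>v\<in>{u<..<n}. fw u v)" .
  consider "u = 0" | "1 \<le> u" "u \<le> n - 2" | "u = n - 1" using assms by linarith
  then show ?thesis
  proof cases
    case 1 then show ?thesis using e fwd_0 by simp
  next
    case 2 then show ?thesis using e back_mid[OF 2] fwd_mid[OF 2] by simp
  next
    case 3
    have "{u<..<n} = {}" using 3 by auto
    then show ?thesis using e back_last 3 by simp
  qed
qed

definition bi :: "nat set \<Rightarrow> nat \<Rightarrow> real" where
  "bi X u = (\<Sum>v\<in>{v \<in> X. v < u}. wt {u, v})"

lemma cut_formula:
  assumes X: "X \<subseteq> VV"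
  shows "cut_weight VV wt X = 2 * d * card X - 2 * (\<Sum>u\<in>X. bi X u)"
proof -
  have finX: "finite X" using X finite_subset by blast
  have "cut_weight VV wt X = (\<Sum>u\<in>X. \<Sum>v\<in>VV - X. wt {u, v})"
    by (rule cut_weight_dsum[OF weight_fun X]) simp
  also have "\<dots> = (\<Sum>u\<in>X. 2 * d - (\<Sum>v\<in>X - {u}. wt {u, v}))"
  proof (rule sum.cong[OF refl])
    fix u assume u: "u \<in> X"
    have eq: "VV - {u} = (VV - X) \<union> (X - {u})" using X u by auto
    have "(\<Sum>v\<in>VV - {u}. wt {u, v}) = (\<Sum>v\<in>VV - X. wt {u, v}) + (\<Sum>v\<in>X - {u}. wt {u, v})"
      unfolding eq using finX by (intro sum.union_disjoint) auto
    then show "(\<Sum>v\<in>VV - X. wt {u, v}) = 2 * d - (\<Sum>v\<in>X - {u}. wt {u, v})"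
      using deg[of u] u X by auto
  qed
  also have "\<dots> = 2 * d * card X - (\<Sum>u\<in>X. \<Sum>v\<in>X - {u}. wt {u, v})"
    by (simp add: sum_subtractf)
  also have "(\<Sum>u\<in>X. \<Sum>v\<in>X - {u}. wt {u, v}) = 2 * (\<Sum>u\<in>X. bi X u)"
  proof -
    have "(\<Sum>u\<in>X. \<Sum>v\<in>X - {u}. wt {u, v})
        = (\<Sum>u\<in>X. (\<Sum>v\<in>{v \<in> X. v < u}. wt {u, v}) + (\<Sum>v\<in>{v \<in> X. u < v}. wt {u, v}))"
    proof (rule sum.cong[OF refl])
      fix u assume "u \<in> X"
      have eq: "X - {u} = {v \<in> X. v < u} \<union> {v \<in> X. u < v}" by auto
      show "(\<Sum>v\<in>X - {u}. wt {u, v}) = (\<Sum>v\<in>{v \<in> X. v < u}. wt {u, v}) + (\<Sum>v\<in>{v \<in> X. u < v}. wt {u, v})"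
        unfolding eq using finX by (intro sum.union_disjoint) auto
    qed
    also have "\<dots> = (\<Sum>u\<in>X. bi X u) + (\<Sum>u\<in>X. \<Sum>v\<in>{v \<in> X. u < v}. wt {u, v})"
      by (simp add: sum.distrib bi_def)
    also have "(\<Sum>u\<in>X. \<Sum>v\<in>{v \<in> X. u < v}. wt {u, v}) = (\<Sum>v\<in>X. \<Sum>u\<in>{u \<in> X. u < v}. wt {u, v})"
      by (rule sum.swap_restrict[OF finX finX])
    also have "\<dots> = (\<Sum>u\<in>X. bi X u)"
      by (simp add: bi_def insert_commute)
    finally show ?thesis by simp
  qed
  finally show ?thesis by simp
qed


lemma back_wt: assumes "1 \<le> u" "u \<le> n - 2" shows "(\<Sum>v\<in>{..<u}. wt {u, v}) = d"
proof -
  have "(\<Sum>v\<in>{..<u}. wt {u, v}) = (\<Sum>v\<in>{..<u}. fw v u)"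
    by (rule sum.cong) (auto simp: wt_gt)
  then show ?thesis using back_mid[OF assms] by simp
qed

lemma wt_nonneg: "wt e \<ge> 0"
  using fw_nonneg by (simp add: wt_def)

lemma bi_le: assumes "1 \<le> u" "u \<le> n - 2" shows "bi X u \<le> d"
proof -
  have "bi X u \<le> (\<Sum>v\<in>{..<u}. wt {u, v})"
    unfolding bi_def by (rule sum_mono2) (auto simp: wt_nonneg)
  then show ?thesis using back_wt[OF assms] by simp
qed

lemma bi_gap: assumes "1 \<le> u" "u \<le> n - 2" "bi X u = d" "v < u" "v \<notin> X"
  shows "wt {u, v} = 0"
proof -
  have eq: "{..<u} = {v \<in> X. v < u} \<union> ({..<u} - X)" by auto
  have "(\<Sum>v\<in>{..<u}. wt {u, v}) = bi X u + (\<Sum>v\<in>{..<u} - X. wt {u, v})"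
    unfolding bi_def by (subst eq, rule sum.union_disjoint) auto
  then have z: "(\<Sum>v\<in>{..<u} - X. wt {u, v}) = 0" using back_wt[OF assms(1,2)] assms(3) by simp
  have "\<forall>v\<in>{..<u} - X. wt {u, v} = 0"
    using sum_nonneg_eq_0_iff[of "{..<u} - X" "\<lambda>v. wt {u, v}"] z wt_nonneg by auto
  then show ?thesis using assms by auto
qed

lemma key:
  assumes X: "X \<subseteq> {0..<n-1}" "X \<noteq> {}"
  shows "cut_weight VV wt X \<ge> 2 * d"
    and "cut_weight VV wt X = 2 * d \<Longrightarrow> u \<in> X \<Longrightarrow> u \<noteq> Min X \<Longrightarrow> 0 \<in> X \<and> (2 \<le> u \<longrightarrow> u - 1 \<in> X)"
proof -
  have XV: "X \<subseteq> VV" using X by auto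
  have finX: "finite X" using X finite_subset by blast
  define m where "m = Min X"
  have m: "m \<in> X" using finX X by (simp add: m_def)
  have mle: "\<And>u. u \<in> X \<Longrightarrow> m \<le> u" using finX by (simp add: m_def)
  have range: "\<And>u. u \<in> X - {m} \<Longrightarrow> 1 \<le> u \<and> u \<le> n - 2"
  proof -
    fix u assume u: "u \<in> X - {m}"
    then have "m < u" using mle by force
    moreover have "u < n - 1" using u X by auto
    ultimately show "1 \<le> u \<and> u \<le> n - 2" by linarith
  qed
  have e0: "{v \<in> X. v < m} = {}" using mle by force
  have bim: "bi X m = 0" unfolding bi_def e0 by simp
  have s1: "(\<Sum>u\<in>X. bi X u) = (\<Sum>u\<in>X - {m}. bi X u)"
    using sum.remove[OF finX m, of "bi X"] bim by simp
  have cardm: "real (card (X - {m})) = real (card X) - 1"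
  proof -
    have "card X \<ge> 1" using finX X(2) by (simp add: Suc_leI card_gt_0_iff)
    then show ?thesis using finX m by (simp add: card_Diff_singleton of_nat_diff)
  qed
  have cw: "cut_weight VV wt X = 2 * d + 2 * (\<Sum>u\<in>X - {m}. d - bi X u)"
  proof -
    have c2: "real (card X) = real (card (X - {m})) + 1" using cardm by simp
    show ?thesis using cut_formula[OF XV] s1 unfolding c2 by (simp add: sum_subtractf algebra_simps)
  qed
  have nn: "\<And>u. u \<in> X - {m} \<Longrightarrow> 0 \<le> d - bi X u" using bi_le range by fastforce
  have "0 \<le> (\<Sum>u\<in>X - {m}. d - bi X u)" by (rule sum_nonneg) (rule nn)
  then show "cut_weight VV wt X \<ge> 2 * d" using cw by simp
  assume eq: "cut_weight VV wt X = 2 * d" and u: "u \<in> X" "u \<noteq> Min X"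
  then have "(\<Sum>u\<in>X - {m}. d - bi X u) = 0" using cw by simp
  then have "\<forall>u\<in>X - {m}. d - bi X u = 0"
    using sum_nonneg_eq_0_iff[of "X - {m}" "\<lambda>u. d - bi X u"] finX nn by auto
  then have biu: "bi X u = d" using u m_def by auto
  have ur: "1 \<le> u" "u \<le> n - 2" using range u m_def by auto
  show "0 \<in> X \<and> (2 \<le> u \<longrightarrow> u - 1 \<in> X)"
  proof
    show "0 \<in> X"
    proof (rule ccontr)
      assume "0 \<notin> X"
      then have "wt {u, 0} = 0" using bi_gap[OF ur biu] ur by auto
      moreover have "wt {u, 0} > 0" using ur d_ge1 n3 by (auto simp: wt_gt fw_def)
      ultimately show False by simp
    qed
    show "2 \<le> u \<longrightarrow> u - 1 \<in> X"
    proof (intro impI, rule ccontr)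
      assume u2: "2 \<le> u" and "u - 1 \<notin> X"
      then have "wt {u, u - 1} = 0" using bi_gap[OF ur biu] ur by auto
      moreover have "d \<ge> real u" using ur n3 by (simp add: d_def)
      then have "wt {u, u - 1} > 0" using ur u2 n3 by (auto simp: wt_gt fw_def)
      ultimately show False by simp
    qed
  qed
qed


lemma prefix_cw: assumes "M \<le> n - 2" shows "cut_weight VV wt {0..M} = 2 * d"
proof -
  have sub: "{0..M} \<subseteq> VV" using assms n3 by auto
  have b: "bi {0..M} u = (if u = 0 then 0 else d)" if "u \<in> {0..M}" for u
  proof -
    have e: "{v \<in> {0..M}. v < u} = {..<u}" using that by auto
    show ?thesis
    proof (cases "u = 0")
      case True then show ?thesis by (simp add: bi_def)
    next
      case False then show ?thesis using back_wt[of u] that assms unfolding bi_def e by auto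
    qed
  qed
  have "(\<Sum>u\<in>{0..M}. bi {0..M} u) = (\<Sum>u\<in>{0..M}. d - (if u = 0 then d else 0))"
    by (rule sum.cong) (auto simp: b)
  also have "\<dots> = d * real M" by (simp add: sum_subtractf algebra_simps)
  finally show ?thesis using cut_formula[OF sub] by (simp add: algebra_simps)
qed

lemma single_cw: assumes "u < n" shows "cut_weight VV wt {u} = 2 * d"
proof (cases "u = n - 1")
  case False
  have e0: "{v \<in> {u}. v < u} = {}" by auto
  have "bi {u} u = 0" unfolding bi_def e0 by simp
  then show ?thesis using cut_formula[of "{u}"] assms by simp
next
  case True
  have e: "VV - {0..n-2} = {u}" using True n3 by auto
  have "cut_weight VV wt (VV - {0..n-2}) = cut_weight VV wt {0..n-2}"
    by (rule cut_weight_compl) (use n3 in auto)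
  then show ?thesis using prefix_cw[of "n-2"] e by simp
qed

lemma lower: assumes "X \<subseteq> VV" "X \<noteq> {}" "X \<noteq> VV" shows "cut_weight VV wt X \<ge> 2 * d"
proof (cases "n - 1 \<in> X")
  case False
  have "X \<subseteq> {0..<n-1}"
  proof
    fix x assume "x \<in> X"
    then have "x < n" "x \<noteq> n - 1" using assms(1) False by auto
    then show "x \<in> {0..<n-1}" by simp
  qed
  then show ?thesis using key(1) assms(2) by blast
next
  case True
  have "VV - X \<subseteq> {0..<n-1}"
  proof
    fix x assume "x \<in> VV - X"
    then have "x < n" "x \<noteq> n - 1" using True by auto
    then show "x \<in> {0..<n-1}" by simp
  qed
  moreover have "VV - X \<noteq> {}" using assms by auto
  ultimately have "cut_weight VV wt (VV - X) \<ge> 2 * d" using key(1) by blast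
  then show ?thesis using cut_weight_compl[OF assms(1)] by simp
qed


lemma char:
  assumes X: "X \<subseteq> {0..<n-1}" "X \<noteq> {}" and eq: "cut_weight VV wt X = 2 * d"
  shows "(\<exists>v. X = {v}) \<or> (\<exists>M. 1 \<le> M \<and> M \<le> n - 2 \<and> X = {0..M})"
proof (cases "\<exists>u\<in>X. u \<noteq> Min X")
  case False
  then have "X = {Min X}" using X by auto
  then show ?thesis by blast
next
  case True
  then obtain u where u: "u \<in> X" "u \<noteq> Min X" by blast
  have finX: "finite X" using X finite_subset by blast
  have kk: "\<And>u. u \<in> X \<Longrightarrow> u \<noteq> Min X \<Longrightarrow> 0 \<in> X \<and> (2 \<le> u \<longrightarrow> u - 1 \<in> X)"
    using key(2)[OF X eq] by blast
  have z: "0 \<in> X" using kk[OF u] by blast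
  then have minz: "Min X = 0" using finX Min_le[OF finX z] by simp
  define M where "M = Max X"
  have MX: "M \<in> X" using finX X by (simp add: M_def)
  have leM: "\<And>x. x \<in> X \<Longrightarrow> x \<le> M" using finX by (simp add: M_def)
  have Mr: "M \<le> n - 2" using MX X by auto
  have M1: "1 \<le> M" using u minz leM by fastforce
  have down: "j \<le> M \<Longrightarrow> M - j \<in> X" for j
  proof (induction j)
    case 0 then show ?case using MX by simp
  next
    case (Suc j)
    then have a: "M - j \<in> X" by simp
    have b: "M - j \<noteq> Min X" using Suc.prems minz by simp
    show ?case
    proof (cases "2 \<le> M - j")
      case True
      then have "M - j - 1 \<in> X" using kk[OF a b] by blast
      moreover have "M - j - 1 = M - Suc j" by simp
      ultimately show ?thesis by simp
    next
      case False
      then have "M - Suc j = 0" using Suc.prems by simp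
      then show ?thesis using z by simp
    qed
  qed
  have "X = {0..M}"
  proof
    show "X \<subseteq> {0..M}" using leM by auto
    show "{0..M} \<subseteq> X"
    proof
      fix k assume "k \<in> {0..M}"
      then have "M - (M - k) \<in> X" "M - (M - k) = k" using down[of "M - k"] by auto
      then show "k \<in> X" by simp
    qed
  qed
  then show ?thesis using M1 Mr by blast
qed

lemma in_min: assumes "X \<subseteq> VV" "X \<noteq> {}" "X \<noteq> VV" "cut_weight VV wt X = 2 * d"
  shows "cut VV wt X \<in> min_cuts VV wt"
proof -
  have "\<forall>Y. proper_cut_side VV Y \<longrightarrow> cut_weight VV wt X \<le> cut_weight VV wt Y"
    using assms(4) lower unfolding proper_cut_side_def by auto
  moreover have "proper_cut_side VV X" using assms unfolding proper_cut_side_def by auto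
  ultimately show ?thesis unfolding min_cuts_def by blast
qed

definition Fam where
  "Fam = (\<lambda>v. cut VV wt {v}) ` VV \<union> (\<lambda>j. cut VV wt {0..j}) ` {1..<n-2}"

lemma fam_aux: assumes "Y \<subseteq> {0..<n-1}" "Y \<noteq> {}" "cut_weight VV wt Y = 2 * d"
  shows "cut VV wt Y \<in> Fam"
proof -
  from char[OF assms] show ?thesis
  proof
    assume "\<exists>v. Y = {v}"
    then obtain v where "Y = {v}" by blast
    then show ?thesis using assms(1) unfolding Fam_def by auto
  next
    assume "\<exists>M. 1 \<le> M \<and> M \<le> n - 2 \<and> Y = {0..M}"
    then obtain M where M: "1 \<le> M" "M \<le> n - 2" "Y = {0..M}" by blast
    show ?thesis
    proof (cases "M = n - 2")
      case True
      have e: "VV - {n - 1} = {0..M}" using True n3 by auto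
      have "cut VV wt (VV - {n-1}) = cut VV wt {n-1}" by (rule cut_compl) (use n3 in auto)
      then have "cut VV wt Y = cut VV wt {n-1}" using e M by simp
      moreover have "n - 1 \<in> VV" using n3 by simp
      ultimately show ?thesis unfolding Fam_def by blast
    next
      case False
      then have "M \<in> {1..<n-2}" using M by auto
      then show ?thesis unfolding Fam_def using M by blast
    qed
  qed
qed

lemma min_sub: "min_cuts VV wt \<subseteq> Fam"
proof
  fix c assume "c \<in> min_cuts VV wt"
  then obtain X where X0: "c = cut VV wt X" "proper_cut_side VV X"
    and mn: "\<forall>Y. proper_cut_side VV Y \<longrightarrow> cut_weight VV wt X \<le> cut_weight VV wt Y"
    unfolding min_cuts_def by blast
  from X0(2) have "X \<noteq> {}" "X \<subset> VV" unfolding proper_cut_side_def by blast+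
  then have X: "c = cut VV wt X" "X \<noteq> {}" "X \<subseteq> VV" "X \<noteq> VV" using X0(1) by blast+
  have s0: "{0} \<subseteq> VV" using n3 by simp
  have s1: "1 \<in> VV" "(1::nat) \<notin> {0}" using n3 by simp_all
  have "proper_cut_side VV {0}" unfolding proper_cut_side_def using s0 s1 by blast
  then have "cut_weight VV wt X \<le> cut_weight VV wt {0}" using mn by blast
  moreover have "cut_weight VV wt X \<ge> 2 * d" using lower[OF X(3,2,4)] .
  ultimately have eq: "cut_weight VV wt X = 2 * d" using single_cw[of 0] n3 by simp
  show "c \<in> Fam"
  proof (cases "n - 1 \<in> X")
    case False
    have "X \<subseteq> {0..<n-1}"
    proof
      fix x assume "x \<in> X"
      then have "x < n" "x \<noteq> n - 1" using X(3) False by auto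
      then show "x \<in> {0..<n-1}" by simp
    qed
    then show ?thesis using fam_aux[OF _ X(2) eq] X(1) by blast
  next
    case True
    have sub: "VV - X \<subseteq> {0..<n-1}"
    proof
      fix x assume "x \<in> VV - X"
      then have "x < n" "x \<noteq> n - 1" using True by auto
      then show "x \<in> {0..<n-1}" by simp
    qed
    have ne: "VV - X \<noteq> {}" using X(3,4) by auto
    have "cut VV wt (VV - X) = cut VV wt X" by (rule cut_compl) (use X(3) in auto)
    moreover have "cut_weight VV wt (VV - X) = 2 * d" using cut_weight_compl[OF X(3)] eq by simp
    ultimately show ?thesis using fam_aux[OF sub ne] X(1) by simp
  qed
qed

lemma card_Fam: "card Fam \<le> 2 * n - 3"
proof -
  have "card Fam \<le> card ((\<lambda>v. cut VV wt {v}) ` VV) + card ((\<lambda>j. cut VV wt {0..j}) ` {1..<n-2})"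
    unfolding Fam_def by (rule card_Un_le)
  also have "\<dots> \<le> card VV + card {1..<n-2}" by (intro add_mono card_image_le) auto
  finally show ?thesis using n3 by simp
qed

lemma fin_Fam: "finite Fam" unfolding Fam_def by simp


lemma edge_iff: assumes "a \<noteq> b" "a < n" "b < n"
  shows "{a, b} \<in> edges VV wt \<longleftrightarrow> wt {a, b} > 0"
  using assms unfolding edges_def by auto

lemma ebet_eval: assumes "a \<noteq> b" "a < n" "b < n"
  shows "charvec (Ebet VV wt v X) {a, b} =
    (if wt {a, b} > 0 \<and> ((a = v \<and> b \<in> X) \<or> (b = v \<and> a \<in> X)) then 1 else 0)"
  using assms unfolding charvec_def Ebet_def edge_iff[OF assms, symmetric]
  by (auto simp: doubleton_eq_iff)

lemma cut_eval: assumes "a \<noteq> b" "a < n" "b < n"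
  shows "charvec (cut VV wt X) {a, b} = (if wt {a, b} > 0 \<and> (a \<in> X) \<noteq> (b \<in> X) then 1 else 0)"
  using assms unfolding charvec_def cut_def edge_iff[OF assms, symmetric]
  by (auto simp: cpi)

abbreviation "SP \<equiv> FV.span (charvec ` min_cuts VV wt)"

lemma mc_pref: assumes "M \<le> n - 2" shows "charvec (cut VV wt {0..M}) \<in> SP"
proof -
  have "n - 1 \<notin> {0..M}" using assms n3 by auto
  moreover have "n - 1 \<in> VV" using n3 by auto
  ultimately have ne: "{0..M} \<noteq> VV" by blast
  have "cut VV wt {0..M} \<in> min_cuts VV wt"
    by (rule in_min) (use assms n3 ne prefix_cw in auto)
  then show ?thesis by (intro FV.span_base imageI)
qed

lemma mc_single: assumes "v < n" shows "charvec (cut VV wt {v}) \<in> SP"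
proof -
  have "{v} \<noteq> VV"
  proof
    assume "{v} = VV"
    moreover have "0 \<in> VV" "1 \<in> VV" using n3 by auto
    ultimately have "0 \<in> {v}" "(1::nat) \<in> {v}" by simp_all
    then show False by simp
  qed
  then have "cut VV wt {v} \<in> min_cuts VV wt"
    by (intro in_min) (use assms single_cw in auto)
  then show ?thesis by (intro FV.span_base imageI)
qed

definition B :: "nat \<Rightarrow> nat set \<Rightarrow> real" where "B j = charvec (Ebet VV wt j {0..<j})"
definition F :: "nat \<Rightarrow> nat set \<Rightarrow> real" where "F k = charvec (Ebet VV wt k {k<..<n})"

lemma half_step:
  assumes "X \<subseteq> VV" "v \<in> VV" "v \<notin> X"
    "charvec (cut VV wt X) \<in> SP" "charvec (cut VV wt (insert v X)) \<in> SP"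
  shows "charvec (Ebet VV wt v X) \<in> SP"
proof -
  let ?L = "charvec (cut VV wt X) + charvec (cut VV wt {v}) - charvec (cut VV wt (insert v X))"
  have L: "?L \<in> SP"
    using assms mc_single[of v] by (intro FV.span_diff FV.span_add) auto
  have eq: "?L = (\<lambda>c f x. c * f x) 2 (charvec (Ebet VV wt v X))"
    by (rule charvec_step) (use assms in auto)
  have e2: "charvec (Ebet VV wt v X) = (\<lambda>c f x. c * f x) (1/2) ?L"
    unfolding eq by (simp add: fun_eq_iff)
  show ?thesis by (subst e2) (rule FV.span_scale[OF L])
qed

lemma B_in: assumes "1 \<le> j" "j \<le> n - 2" shows "B j \<in> SP"
proof -
  have e1: "{0..<j} = {0..j-1}" using assms by auto
  have e2: "insert j {0..<j} = {0..j}" by auto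
  show ?thesis unfolding B_def
    by (rule half_step) (use assms n3 mc_pref[of "j-1"] mc_pref[of j] e1 e2 in auto)
qed

lemma F_in: assumes "1 \<le> k" "k \<le> n - 2" shows "F k \<in> SP"
proof -
  have e1: "{k<..<n} = VV - {0..k}" by auto
  have e2: "insert k {k<..<n} = VV - {0..k-1}" using assms by auto
  have c1: "cut VV wt {k<..<n} = cut VV wt {0..k}" unfolding e1 by (rule cut_compl) (use assms n3 in auto)
  have c2: "cut VV wt (insert k {k<..<n}) = cut VV wt {0..k-1}" unfolding e2 by (rule cut_compl) (use assms n3 in auto)
  show ?thesis unfolding F_def
    by (rule half_step) (use assms n3 mc_pref[of "k-1"] mc_pref[of k] c1 c2 in auto)
qed


lemma fw_0_pos: assumes "1 \<le> j" "j \<le> n - 2" shows "wt {0, j} > 0"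
  using assms d_ge1 n3 by (auto simp: wt_lt fw_def)

lemma fw_last_pos: assumes "k \<le> n - 2" shows "wt {k, n - 1} > 0"
  using assms d_ge1 n3 by (auto simp: wt_lt fw_def)

lemma vB1: assumes "1 \<le> j" "j \<le> n - 2" "1 \<le> j'" "j' \<le> n - 2"
  shows "B j {0, j'} = (if j = j' then 1 else 0)"
  unfolding B_def using assms fw_0_pos[of j'] n3 by (subst ebet_eval) auto

lemma vB2: assumes "1 \<le> j" "j \<le> n - 2" "k \<le> n - 2"
  shows "B j {k, n - 1} = 0"
  unfolding B_def using assms n3 by (subst ebet_eval) auto

lemma vF1: assumes "1 \<le> k" "k \<le> n - 2" "1 \<le> j" "j \<le> n - 2"
  shows "F k {0, j} = 0"
  unfolding F_def using assms n3 by (subst ebet_eval) auto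

lemma vF2: assumes "1 \<le> k" "k \<le> n - 2" "1 \<le> k'" "k' \<le> n - 2"
  shows "F k {k', n - 1} = (if k = k' then 1 else 0)"
  unfolding F_def using assms fw_last_pos[of k'] n3 by (subst ebet_eval) auto

lemma vF3: assumes "1 \<le> k" "k \<le> n - 2"
  shows "F k {0, n - 1} = 0"
  unfolding F_def using assms n3 by (subst ebet_eval) auto

definition S0 :: "nat set \<Rightarrow> real" where "S0 = charvec (cut VV wt {0})"

lemma vS1: "S0 {0, n - 1} = 1"
  unfolding S0_def using n3 fw_last_pos[of 0] by (subst cut_eval) auto

lemma vS2: assumes "1 \<le> j" "j \<le> n - 2" shows "S0 {0, j} = 1"
  unfolding S0_def using assms n3 fw_0_pos[of j] by (subst cut_eval) auto

lemma vS3: assumes "1 \<le> k" "k \<le> n - 2" shows "S0 {k, n - 1} = 0"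
  unfolding S0_def using assms n3 by (subst cut_eval) auto

definition Wv :: "nat set \<Rightarrow> real" where "Wv = S0 - (\<Sum>j\<in>{1..n-2}. B j)"

lemma Wv_eval: "Wv e = S0 e - (\<Sum>j\<in>{1..n-2}. B j e)"
  by (simp add: Wv_def sum_fun_apply)

lemma vW1: "Wv {0, n - 1} = 1"
  unfolding Wv_eval using vS1 vB2[of _ 0] by simp

lemma vW2: assumes "1 \<le> j" "j \<le> n - 2" shows "Wv {0, j} = 0"
proof -
  have "(\<Sum>j'\<in>{1..n-2}. B j' {0, j}) = (\<Sum>j'\<in>{1..n-2}. if j' = j then 1 else 0)"
    by (rule sum.cong) (use assms vB1 in auto)
  also have "\<dots> = 1" using assms by simp
  finally show ?thesis unfolding Wv_eval using vS2[OF assms] by simp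
qed

lemma vW3: assumes "1 \<le> k" "k \<le> n - 2" shows "Wv {k, n - 1} = 0"
  unfolding Wv_eval using vS3[OF assms] vB2[of _ k] assms by simp

lemma Wv_in: "Wv \<in> SP"
  unfolding Wv_def S0_def using mc_single[of 0] B_in n3
  by (intro FV.span_diff FV.span_sum) auto

definition g :: "nat \<Rightarrow> nat set \<Rightarrow> real" where
  "g i = (if i = 0 then Wv else if i \<le> n - 2 then B i else F (i - (n - 2)))"
definition p :: "nat \<Rightarrow> nat set" where
  "p i = (if i = 0 then {0, n - 1} else if i \<le> n - 2 then {0, i} else {i - (n - 2), n - 1})"

lemma diag_nz: assumes "i \<in> {0..2*(n-2)}" shows "g i (p i) \<noteq> 0"
  using assms vW1 vB1[of i i] vF2[of "i - (n-2)" "i - (n-2)"] by (auto simp: g_def p_def)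

lemma diag_z: assumes "i \<in> {0..2*(n-2)}" "i' \<in> {0..2*(n-2)}" "i' \<noteq> i" shows "g i' (p i) = 0"
proof -
  consider "i = 0" | "1 \<le> i" "i \<le> n - 2" | "n - 2 < i" by linarith
  then show ?thesis
  proof cases
    case 1
    then show ?thesis using assms vB2[of i' 0] vF3[of "i' - (n-2)"] by (auto simp: g_def p_def)
  next
    case 2
    then show ?thesis using assms vW2[of i] vB1[of i' i] vF1[of "i' - (n-2)" i] by (auto simp: g_def p_def)
  next
    case 3
    define k where "k = i - (n - 2)"
    have k: "1 \<le> k" "k \<le> n - 2" using 3 assms(1) by (auto simp: k_def)
    have pi: "p i = {k, n - 1}" using 3 by (simp add: p_def k_def)
    consider "i' = 0" | "1 \<le> i'" "i' \<le> n - 2" | "n - 2 < i'" by linarith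
    then show ?thesis
    proof cases
      case 1 then show ?thesis using vW3[OF k] pi by (simp add: g_def)
    next
      case 2 then show ?thesis using vB2[OF 2 k(2)] pi by (simp add: g_def)
    next
      case c: 3
      define k' where "k' = i' - (n - 2)"
      have k': "1 \<le> k'" "k' \<le> n - 2" "k' \<noteq> k" using c 3 assms by (auto simp: k'_def k_def)
      have gi: "g i' = F k'" using c by (simp add: g_def k'_def)
      show ?thesis using vF2[OF k'(1,2) k] k' pi gi by simp
    qed
  qed
qed

lemma g_in: assumes "i \<in> {0..2*(n-2)}" shows "g i \<in> SP"
  using assms Wv_in B_in[of i] F_in[of "i - (n-2)"] by (auto simp: g_def)

lemma main: "cdim VV wt = 2 * n - 3"
proof (rule cdim_from[OF fin_Fam min_sub card_Fam])
  have fin: "finite {0..2*(n-2)}" by simp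
  show "g ` {0..2*(n-2)} \<subseteq> SP" using g_in by auto
  show "FV.independent (g ` {0..2*(n-2)})" by (rule diag_indep(2)[of "{0..2*(n-2)}" g p, OF fin diag_nz diag_z])
  have "card (g ` {0..2*(n-2)}) = card {0..2*(n-2)}"
    by (rule card_image, rule diag_indep(1)[of "{0..2*(n-2)}" g p, OF fin diag_nz diag_z])
  then show "card (g ` {0..2*(n-2)}) = 2 * n - 3" using n3 by simp
qed

end


lemma two_case: "cdim {0..<2::nat} (\<lambda>e. 1) = 1"
proof -
  let ?V = "{0..<2::nat}" and ?w = "(\<lambda>e::nat set. 1::real)"
  have V: "?V = {0, 1}" by auto
  have cX: "cut ?V ?w X = cut ?V ?w {0}" if "proper_cut_side ?V X" for X
  proof -
    from that have ne: "X \<noteq> {}" and ps: "X \<subset> {0,1}" unfolding proper_cut_side_def V by blast+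
    have "X = {0} \<or> X = {1}"
    proof (cases "0 \<in> X")
      case True
      then have "1 \<notin> X" using ps by blast
      then show ?thesis using True ps by blast
    next
      case False
      then show ?thesis using ne ps by blast
    qed
    moreover have "cut ?V ?w (?V - {0}) = cut ?V ?w {0}" by (rule cut_compl) simp
    moreover have "?V - {0} = {1}" by auto
    ultimately show ?thesis by metis
  qed
  have p0: "proper_cut_side ?V {0}" unfolding proper_cut_side_def V by (simp add: psubset_eq)
  have mc: "min_cuts ?V ?w = {cut ?V ?w {0}}"
  proof
    show "min_cuts ?V ?w \<subseteq> {cut ?V ?w {0}}" unfolding min_cuts_def using cX by blast
    have "\<forall>Y. proper_cut_side ?V Y \<longrightarrow> cut_weight ?V ?w {0} \<le> cut_weight ?V ?w Y"
      using cX by (simp add: cut_weight_def)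
    then show "{cut ?V ?w {0}} \<subseteq> min_cuts ?V ?w"
      unfolding min_cuts_def using p0 by blast
  qed
  have e01: "{0::nat, 1} \<in> edges ?V ?w" unfolding edges_def
    by (rule CollectI, rule exI[of _ 0], rule exI[of _ 1]) simp
  have val: "charvec (cut ?V ?w {0}) {0::nat, 1} = 1"
  proof -
    have "card ({0::nat, 1} \<inter> {0}) = 1" by (subst cpi) auto
    then show ?thesis using e01 unfolding charvec_def cut_def by simp
  qed
  have fin: "finite {0::nat}" by simp
  have nz: "\<And>i. i \<in> {0::nat} \<Longrightarrow> (\<lambda>_. charvec (cut ?V ?w {0})) i ((\<lambda>_. {0::nat, 1}) i) \<noteq> 0"
    using val by simp
  have z: "\<And>i j. i \<in> {0::nat} \<Longrightarrow> j \<in> {0} \<Longrightarrow> j \<noteq> i \<Longrightarrow>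
      (\<lambda>_. charvec (cut ?V ?w {0})) j ((\<lambda>_. {0::nat, 1}) i) = 0" by simp
  have ind: "FV.independent {charvec (cut ?V ?w {0})}"
    using diag_indep(2)[of "{0::nat}" "\<lambda>_. charvec (cut ?V ?w {0})" "\<lambda>_. {0::nat, 1}", OF fin nz z] by simp
  show ?thesis
  proof (rule cdim_from[of "{cut ?V ?w {0}}"])
    show "{charvec (cut ?V ?w {0})} \<subseteq> FV.span (charvec ` min_cuts ?V ?w)"
      unfolding mc by (simp add: FV.span_base)
  qed (use mc ind in auto)
qed

theorem theorem2:
  fixes n :: nat
  assumes "n \<ge> 2"
  shows "\<exists>(V :: nat set) (w :: nat set \<Rightarrow> real).
           finite V \<and> card V = n \<and> weight_fun V w \<and> cdim V w = 2 * n - 3"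
proof (cases "n = 2")
  case True
  have "weight_fun {0..<2::nat} (\<lambda>e. 1)" unfolding weight_fun_def by simp
  then show ?thesis using two_case True by (intro exI[of _ "{0..<2::nat}"] exI[of _ "\<lambda>e. 1"]) simp
next
  case False
  then have "3 \<le> n" using assms by simp
  then interpret Gr n by unfold_locales
  show ?thesis using weight_fun main by (intro exI[of _ "{0..<n}"] exI[of _ wt]) simp
qed


end
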